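(* Let $F$ be a field and $r,s\ge1$ integers. If $|F|\ge\min\{r,s\}+2$, then there exist matrices $A\in F^{r\times r}$ and $B\in F^{s\times s}$ such that $C(A,B)$ has dimension $\min\{r,s\}$ and minimum distance $\max\{r,s\}$.
   Context: $C(A,B):=\{X\in F^{r\times s}\mid AX=XB\}$, viewed as a linear code of length $rs$ by regarding each matrix as the vector of its $rs$ entries. The minimum (Hamming) distance of a subspace $C$ is $\min\{\text{number of nonzero entries of }w\mid w\in C,\ w\neq0\}$. *)

theory Defs
  imports "Jordan_Normal_Form.VS_Connect"
begin

definition centralizer_code :: "'a::field mat \<Rightarrow> 'a mat \<Rightarrow> 'a mat set" where
  "centralizer_code A B = {X \<in> carrier_mat (dim_row A) (dim_row B). A * X = X * B}"

definition mat_subspace_dim :: "nat \<Rightarrow> nat \<Rightarrow> 'a::field mat set \<Rightarrow> nat" where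
  "mat_subspace_dim r s W =
     vectorspace.dim (class_ring :: 'a ring) ((module_mat TYPE('a) r s)\<lparr>carrier := W\<rparr>)"

definition mat_weight :: "'a::zero mat \<Rightarrow> nat" where
  "mat_weight X = card {(i, j). i < dim_row X \<and> j < dim_col X \<and> X $$ (i, j) \<noteq> 0}"

definition min_distance :: "nat \<Rightarrow> nat \<Rightarrow> 'a::zero mat set \<Rightarrow> nat" where
  "min_distance r s C = Min (mat_weight ` {X \<in> C. X \<noteq> 0\<^sub>m r s})"

end

theory Submission
  imports Defs "HOL-Computational_Algebra.Polynomial"
begin

lemma dim_via_map:
  fixes T :: "'a::field vec \<Rightarrow> 'a mat"
  assumes carr: "\<And>u. u \<in> carrier_vec m \<Longrightarrow> T u \<in> carrier_mat r s"
    and add: "\<And>u v. u \<in> carrier_vec m \<Longrightarrow> v \<in> carrier_vec m \<Longrightarrow> T (u + v) = T u + T v"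
    and sm: "\<And>k u. u \<in> carrier_vec m \<Longrightarrow> T (k \<cdot>\<^sub>v u) = k \<cdot>\<^sub>m T u"
    and inj: "\<And>u. u \<in> carrier_vec m \<Longrightarrow> T u = 0\<^sub>m r s \<Longrightarrow> u = 0\<^sub>v m"
  shows "mat_subspace_dim r s (T ` carrier_vec m) = m"
proof -
  interpret V: vec_space "TYPE('a)" m .
  have vsW: "vectorspace (class_ring :: 'a ring) (module_mat TYPE('a) r s)" by (rule matrix_vs)
  interpret lm: linear_map "class_ring :: 'a ring" "module_vec TYPE('a) m" "module_mat TYPE('a) r s" T
  proof -
    have h: "T \<in> LinearCombinations.module_hom class_ring (module_vec TYPE('a) m) (module_mat TYPE('a) r s)"
      unfolding LinearCombinations.module_hom_def using carr add sm
      by (auto simp: module_vec_simps module_mat_simps)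
    have vV: "vectorspace (class_ring :: 'a ring) (module_vec TYPE('a) m)" by (rule vec_vs)
    show "linear_map (class_ring :: 'a ring) (module_vec TYPE('a) m) (module_mat TYPE('a) r s) T" using h vV vsW
      unfolding linear_map_def mod_hom_def mod_hom_axioms_def vectorspace_def by auto
  qed
  have rn: "vectorspace.dim class_ring ((module_mat TYPE('a) r s)\<lparr>carrier := lm.imT\<rparr>) + vectorspace.dim class_ring ((module_vec TYPE('a) m)\<lparr>carrier := lm.kerT\<rparr>) = m"
    using lm.rank_nullity[OF V.fin_dim] V.dim_is_n by simp
  have T0: "T (0\<^sub>v m) = 0\<^sub>m r s"
    using lm.T0_is_0 by (simp add: module_vec_simps module_mat_simps)
  have ker: "lm.kerT = {0\<^sub>v m}"
  proof -
    have "lm.kerT = {v. v \<in> carrier_vec m \<and> T v = 0\<^sub>m r s}"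
      unfolding mod_hom.ker_def[OF lm.mod_hom_axioms] by (simp add: module_vec_simps module_mat_simps)
    also have "\<dots> = {0\<^sub>v m}"
      using inj T0 by blast
    finally show ?thesis .
  qed
  have im: "lm.imT = T ` carrier_vec m"
    unfolding mod_hom.im_def[OF lm.mod_hom_axioms] by (simp add: module_vec_simps)
  interpret K: vectorspace "class_ring :: 'a ring" "(module_vec TYPE('a) m)\<lparr>carrier := lm.kerT\<rparr>"
    by (rule V.subspace_is_vs[OF lm.kerT_is_subspace])
  have lc: "\<And>a. K.lincomb a {} = 0\<^sub>v m"
    unfolding K.lincomb_def by (simp add: module_vec_simps)
  have "K.basis {}"
    unfolding K.basis_def
  proof (intro conjI)
    show "K.lin_indpt {}" unfolding K.lin_dep_def by blast
    show "K.span {} = carrier ((module_vec TYPE('a) m)\<lparr>carrier := lm.kerT\<rparr>)"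
    proof -
      have "K.span {} = {K.lincomb a A | a A. A = {} \<and> a \<in> A \<rightarrow> carrier class_ring}"
        unfolding K.span_def by blast
      also have "\<dots> = {0\<^sub>v m}" by (simp add: lc)
      finally show ?thesis using ker by simp
    qed
  qed simp
  then have "vectorspace.dim class_ring ((module_vec TYPE('a) m)\<lparr>carrier := lm.kerT\<rparr>) = 0"
    using K.dim_basis[of "{}"] by simp
  then show ?thesis using rn im unfolding mat_subspace_dim_def by simp
qed

lemma exists_cf:
  fixes lam :: "nat \<Rightarrow> 'a::field"
  assumes "m \<le> n"
  shows "\<exists>cf. \<forall>i<m. (\<Sum>k<n. cf k * lam i ^ k) = lam i ^ n"
proof -
  define q where "q = (\<Prod>i<m. [:- lam i, 1:]) * monom (1::'a) (n - m)"
  have nz: "\<And>i. [:- lam i, 1:] \<noteq> 0" by simp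
  have P0: "(\<Prod>i<m. [:- lam i, 1:]) \<noteq> 0" using nz by (simp add: prod_zero_iff)
  have dP: "degree (\<Prod>i<m. [:- lam i, 1:]) = m"
    using degree_prod_sum_eq[of "{..<m}" "\<lambda>i. [:- lam i, 1:]"] nz by simp
  have degq: "degree q = n" unfolding q_def
    using degree_mult_eq[OF P0, of "monom 1 (n-m)"] dP assms by (simp add: degree_monom_eq)
  have lcq: "coeff q n = 1"
    using degq lead_coeff_mult[of "\<Prod>i<m. [:- lam i, 1:]" "monom 1 (n-m)"] lead_coeff_prod[of "\<lambda>i. [:- lam i, 1:]" "{..<m}"]
    unfolding q_def by (simp add: degree_monom_eq)
  show ?thesis
  proof (intro exI allI impI)
    fix i assume i: "i < m"
    have "poly q (lam i) = 0" unfolding q_def poly_mult poly_prod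
      using i by (auto simp: prod_zero_iff)
    moreover have "poly q (lam i) = (\<Sum>k<n. coeff q k * lam i ^ k) + lam i ^ n"
      unfolding poly_altdef degq using lcq by (simp add: lessThan_Suc_atMost[symmetric])
    ultimately show "(\<Sum>k<n. (- coeff q k) * lam i ^ k) = lam i ^ n"
      by (simp add: sum_negf add_eq_0_iff)
  qed
qed

lemma recur:
  fixes f :: "nat \<Rightarrow> 'a::field"
  assumes n: "n > 0" and root: "(\<Sum>k<n. cf k * lam ^ k) = lam ^ n"
  shows "((\<forall>k. k + 1 < n \<longrightarrow> lam * f k = f (k+1)) \<and> lam * f (n-1) = (\<Sum>k<n. cf k * f k))
     \<longleftrightarrow> (\<forall>k<n. f k = f 0 * lam ^ k)"
proof
  assume h: "(\<forall>k. k + 1 < n \<longrightarrow> lam * f k = f (k+1)) \<and> lam * f (n-1) = (\<Sum>k<n. cf k * f k)"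
  show "\<forall>k<n. f k = f 0 * lam ^ k"
  proof (intro allI impI)
    fix k assume "k < n" then show "f k = f 0 * lam ^ k"
    proof (induction k)
      case (Suc k)
      have k: "k < n" using Suc.prems by simp
      have e1: "f k = f 0 * lam ^ k" using Suc.IH[OF k] .
      have e2: "lam * f k = f (k+1)" using h Suc.prems by simp
      show ?case using e1 e2 by (simp add: mult_ac)
    qed simp
  qed
next
  assume h: "\<forall>k<n. f k = f 0 * lam ^ k"
  have 1: "\<forall>k. k + 1 < n \<longrightarrow> lam * f k = f (k+1)"
  proof (intro allI impI)
    fix k assume k: "k + 1 < n"
    have k1: "k < n" "k + 1 < n" using k by simp_all
    have a: "f k = f 0 * lam ^ k" using h k1 by blast
    have b: "f (k+1) = f 0 * lam ^ (k+1)" using h k1 by blast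
    show "lam * f k = f (k+1)" unfolding a b by (simp add: mult_ac)
  qed
  have "(\<Sum>k<n. cf k * f k) = (\<Sum>k<n. f 0 * (cf k * lam ^ k))"
  proof (rule sum.cong)
    fix k assume "k \<in> {..<n}"
    then have "k < n" by simp
    then have a: "f k = f 0 * lam ^ k" using h by blast
    show "cf k * f k = f 0 * (cf k * lam ^ k)" unfolding a by (simp add: mult_ac)
  qed simp
  also have "\<dots> = f 0 * (\<Sum>k<n. cf k * lam ^ k)" by (simp add: sum_distrib_left)
  also have "\<dots> = f 0 * lam ^ n" using root by (simp only:)
  also have "\<dots> = lam * f (n - 1)"
  proof -
    obtain n' where n': "n = Suc n'" using n by (cases n) auto
    have "n' < n" using n' by simp
    then have a: "f n' = f 0 * lam ^ n'" using h by blast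
    show ?thesis unfolding n' using a by (simp add: mult_ac)
  qed
  finally show "(\<forall>k. k + 1 < n \<longrightarrow> lam * f k = f (k+1)) \<and> lam * f (n-1) = (\<Sum>k<n. cf k * f k)"
    using 1 by simp
qed

lemma supp_sub: "{(i, j). i < dim_row X \<and> j < dim_col X \<and> X $$ (i, j) \<noteq> 0} \<subseteq> {..<dim_row X} \<times> {..<dim_col X}"
  by auto

lemma weight_ge:
  assumes "S \<subseteq> {(i, j). i < dim_row X \<and> j < dim_col X \<and> X $$ (i, j) \<noteq> 0}"
  shows "card S \<le> mat_weight X"
  unfolding mat_weight_def
  by (rule card_mono[OF finite_subset[OF supp_sub] assms]) simp

lemma weight_le: "mat_weight X \<le> dim_row X * dim_col X"
proof -
  have "mat_weight X \<le> card ({..<dim_row X} \<times> {..<dim_col X})"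
    unfolding mat_weight_def by (rule card_mono[OF _ supp_sub]) simp
  then show ?thesis by (simp add: card_cartesian_product)
qed

lemma finish:
  fixes T :: "'a::field vec \<Rightarrow> 'a mat"
  assumes carr: "\<And>u. u \<in> carrier_vec m \<Longrightarrow> T u \<in> carrier_mat r s"
    and add: "\<And>u v. u \<in> carrier_vec m \<Longrightarrow> v \<in> carrier_vec m \<Longrightarrow> T (u + v) = T u + T v"
    and sm: "\<And>k u. u \<in> carrier_vec m \<Longrightarrow> T (k \<cdot>\<^sub>v u) = k \<cdot>\<^sub>m T u"
    and inj: "\<And>u. u \<in> carrier_vec m \<Longrightarrow> T u = 0\<^sub>m r s \<Longrightarrow> u = 0\<^sub>v m"
    and C: "C = T ` carrier_vec m"
    and wge: "\<And>c. c \<in> carrier_vec m \<Longrightarrow> c \<noteq> 0\<^sub>v m \<Longrightarrow> n \<le> mat_weight (T c)"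
    and cz: "cz \<in> carrier_vec m" "cz \<noteq> 0\<^sub>v m" "mat_weight (T cz) = n"
  shows "mat_subspace_dim r s C = m \<and> min_distance r s C = n"
proof
  show "mat_subspace_dim r s C = m" unfolding C by (rule dim_via_map[OF carr add sm inj])
  have T0: "T (0\<^sub>v m) = 0\<^sub>m r s"
  proof -
    have "T (0 \<cdot>\<^sub>v 0\<^sub>v m) = 0 \<cdot>\<^sub>m T (0\<^sub>v m)" by (rule sm) simp
    moreover have "(0::'a) \<cdot>\<^sub>v 0\<^sub>v m = 0\<^sub>v m" by auto
    moreover have "T (0\<^sub>v m) \<in> carrier_mat r s" by (rule carr) simp
    moreover have "\<And>M. M \<in> carrier_mat r s \<Longrightarrow> (0::'a) \<cdot>\<^sub>m M = 0\<^sub>m r s"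
      by (intro eq_matI) auto
    ultimately show ?thesis by metis
  qed
  have S: "{X \<in> C. X \<noteq> 0\<^sub>m r s} = T ` {c \<in> carrier_vec m. c \<noteq> 0\<^sub>v m}"
    using C T0 inj by auto
  have fin: "finite (mat_weight ` {X \<in> C. X \<noteq> 0\<^sub>m r s})"
  proof (rule finite_subset[of _ "{..r*s}"])
    show "mat_weight ` {X \<in> C. X \<noteq> 0\<^sub>m r s} \<subseteq> {..r * s}"
    proof
      fix w assume "w \<in> mat_weight ` {X \<in> C. X \<noteq> 0\<^sub>m r s}"
      then obtain X where X: "X \<in> C" "w = mat_weight X" by auto
      then have "X \<in> carrier_mat r s" using C carr by auto
      then show "w \<in> {..r*s}" using X weight_le[of X] by auto
    qed
  qed simp
  show "min_distance r s C = n"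
    unfolding min_distance_def
  proof (rule Min_eqI[OF fin])
    fix y assume "y \<in> mat_weight ` {X \<in> C. X \<noteq> 0\<^sub>m r s}"
    then show "n \<le> y" unfolding S using wge by auto
  next
    show "n \<in> mat_weight ` {X \<in> C. X \<noteq> 0\<^sub>m r s}" unfolding S using cz by force
  qed
qed

lemma case_le:
  fixes lam :: "nat \<Rightarrow> 'a::field"
  assumes r1: "1 \<le> r" and rs: "r \<le> s" and nz: "\<And>i. i < r \<Longrightarrow> lam i \<noteq> 0"
  shows "\<exists>(A :: 'a mat) B. A \<in> carrier_mat r r \<and> B \<in> carrier_mat s s \<and>
           mat_subspace_dim r s (centralizer_code A B) = r \<and>
           min_distance r s (centralizer_code A B) = s"
proof -
  obtain cf where root: "\<And>i. i < r \<Longrightarrow> (\<Sum>k<s. cf k * lam i ^ k) = lam i ^ s"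
    using exists_cf[OF rs, of lam] by blast
  define A :: "'a mat" where "A = mat r r (\<lambda>(i,j). if i = j then lam i else 0)"
  define B :: "'a mat" where "B = mat s s (\<lambda>(j,k). if k + 1 < s then (if j = k + 1 then 1 else 0) else cf j)"
  define T :: "'a vec \<Rightarrow> 'a mat" where "T = (\<lambda>c. mat r s (\<lambda>(i,j). c $ i * lam i ^ j))"
  have s0: "s > 0" using r1 rs by simp
  have AX: "(A * X) $$ (i,k) = lam i * X $$ (i,k)"
    if X: "X \<in> carrier_mat r s" and i: "i < r" and k: "k < s" for X i k
  proof -
    have "(A * X) $$ (i,k) = (\<Sum>j\<in>{0..<r}. A $$ (i,j) * X $$ (j,k))"
      using X i k by (simp add: A_def scalar_prod_def)
    also have "\<dots> = (\<Sum>j\<in>{0..<r}. if j = i then lam i * X $$ (i,k) else 0)"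
      by (rule sum.cong) (use i in \<open>auto simp: A_def\<close>)
    also have "\<dots> = lam i * X $$ (i,k)" using i by simp
    finally show ?thesis .
  qed
  have XB: "(X * B) $$ (i,k) = (if k + 1 < s then X $$ (i,k+1) else (\<Sum>j<s. cf j * X $$ (i,j)))"
    if X: "X \<in> carrier_mat r s" and i: "i < r" and k: "k < s" for X i k
  proof -
    have "(X * B) $$ (i,k) = (\<Sum>j\<in>{0..<s}. X $$ (i,j) * B $$ (j,k))"
      using X i k by (simp add: B_def scalar_prod_def)
    also have "\<dots> = (\<Sum>j\<in>{0..<s}. if k + 1 < s then (if j = k + 1 then X $$ (i,k+1) else 0) else cf j * X $$ (i,j))"
      by (rule sum.cong) (use k in \<open>auto simp: B_def\<close>)
    also have "\<dots> = (if k + 1 < s then X $$ (i,k+1) else (\<Sum>j<s. cf j * X $$ (i,j)))"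
      by (auto simp: atLeast0LessThan)
    finally show ?thesis .
  qed
  have Ac: "A \<in> carrier_mat r r" and Bc: "B \<in> carrier_mat s s" by (auto simp: A_def B_def)
  have rowcond: "(\<forall>k<s. lam i * X $$ (i,k) = (if k + 1 < s then X $$ (i,k+1) else (\<Sum>j<s. cf j * X $$ (i,j))))
      \<longleftrightarrow> (\<forall>k<s. X $$ (i,k) = X $$ (i,0) * lam i ^ k)" if i: "i < r" for X i
  proof -
    have "(\<forall>k<s. lam i * X $$ (i,k) = (if k + 1 < s then X $$ (i,k+1) else (\<Sum>j<s. cf j * X $$ (i,j))))
      \<longleftrightarrow> ((\<forall>k. k + 1 < s \<longrightarrow> lam i * X $$ (i,k) = X $$ (i,k+1)) \<and> lam i * X $$ (i,s-1) = (\<Sum>j<s. cf j * X $$ (i,j)))"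
      (is "?L \<longleftrightarrow> ?R")
    proof
      assume L: ?L
      have a: "\<forall>k. k + 1 < s \<longrightarrow> lam i * X $$ (i,k) = X $$ (i,k+1)"
      proof (intro allI impI)
        fix k assume "k + 1 < s"
        then show "lam i * X $$ (i,k) = X $$ (i,k+1)" using L[rule_format, of k] by simp
      qed
      have "lam i * X $$ (i,s-1) = (\<Sum>j<s. cf j * X $$ (i,j))" using L[rule_format, of "s-1"] s0 by simp
      then show ?R using a by simp
    next
      assume R: ?R
      show ?L
      proof (intro allI impI)
        fix k assume k: "k < s"
        show "lam i * X $$ (i,k) = (if k + 1 < s then X $$ (i,k+1) else (\<Sum>j<s. cf j * X $$ (i,j)))"
        proof (cases "k + 1 < s")
          case True then show ?thesis using R by simp
        next
          case False then have "k = s - 1" using k by simp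
          then show ?thesis using R False by simp
        qed
      qed
    qed
    also have "\<dots> \<longleftrightarrow> (\<forall>k<s. X $$ (i,k) = X $$ (i,0) * lam i ^ k)"
      by (rule recur[OF s0 root[OF i]])
    finally show ?thesis .
  qed
  have dA: "dim_row A = r" "dim_row B = s" using Ac Bc by auto
  have Cchar: "centralizer_code A B = {X \<in> carrier_mat r s. \<forall>i<r. \<forall>k<s. X $$ (i,k) = X $$ (i,0) * lam i ^ k}"
  proof (rule Set.set_eqI)
    fix X
    show "X \<in> centralizer_code A B \<longleftrightarrow> X \<in> {X \<in> carrier_mat r s. \<forall>i<r. \<forall>k<s. X $$ (i,k) = X $$ (i,0) * lam i ^ k}"
    proof (cases "X \<in> carrier_mat r s")
      case False then show ?thesis unfolding centralizer_code_def dA mem_Collect_eq by blast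
    next
      case X: True
      have "A * X = X * B \<longleftrightarrow> (\<forall>i<r. \<forall>k<s. (A * X) $$ (i,k) = (X * B) $$ (i,k))"
        using X Ac Bc by (auto simp: mat_eq_iff)
      also have "\<dots> \<longleftrightarrow> (\<forall>i<r. \<forall>k<s. lam i * X $$ (i,k) = (if k + 1 < s then X $$ (i,k+1) else (\<Sum>j<s. cf j * X $$ (i,j))))"
        using AX[OF X] XB[OF X] by simp
      also have "\<dots> \<longleftrightarrow> (\<forall>i<r. \<forall>k<s. X $$ (i,k) = X $$ (i,0) * lam i ^ k)"
        using rowcond by blast
      finally have eq: "A * X = X * B \<longleftrightarrow> (\<forall>i<r. \<forall>k<s. X $$ (i,k) = X $$ (i,0) * lam i ^ k)" .
      show ?thesis unfolding centralizer_code_def dA mem_Collect_eq eq by (rule refl)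
    qed
  qed
  have Tc: "T c \<in> carrier_mat r s" for c by (simp add: T_def)
  have Cimg: "centralizer_code A B = T ` carrier_vec r"
  proof
    show "centralizer_code A B \<subseteq> T ` carrier_vec r"
    proof
      fix X assume "X \<in> centralizer_code A B"
      then have X: "X \<in> carrier_mat r s" "\<And>i k. i < r \<Longrightarrow> k < s \<Longrightarrow> X $$ (i,k) = X $$ (i,0) * lam i ^ k"
        unfolding Cchar by blast+
      have "X = T (vec r (\<lambda>i. X $$ (i,0)))"
      proof (rule eq_matI)
        fix i j assume ij: "i < dim_row (T (vec r (\<lambda>i. X $$ (i,0))))" "j < dim_col (T (vec r (\<lambda>i. X $$ (i,0))))"
        then have i: "i < r" and j: "j < s" by (simp_all add: T_def)
        have e: "X $$ (i,j) = X $$ (i,0) * lam i ^ j" by (rule X(2)[OF i j])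
        show "X $$ (i,j) = T (vec r (\<lambda>i. X $$ (i,0))) $$ (i,j)"
          unfolding e using i j by (simp add: T_def)
      qed (use X in \<open>simp_all add: T_def\<close>)
      moreover have "vec r (\<lambda>i. X $$ (i,0)) \<in> carrier_vec r" by simp
      ultimately show "X \<in> T ` carrier_vec r" by (rule image_eqI)
    qed
  next
    show "T ` carrier_vec r \<subseteq> centralizer_code A B"
    proof
      fix X assume "X \<in> T ` carrier_vec r"
      then obtain c where X: "X = T c" by blast
      show "X \<in> centralizer_code A B" unfolding Cchar X mem_Collect_eq
        by (simp add: T_def)
    qed
  qed
  show ?thesis
  proof (intro exI conjI)
    show "A \<in> carrier_mat r r" "B \<in> carrier_mat s s" by (fact Ac, fact Bc)
    have main: "mat_subspace_dim r s (centralizer_code A B) = r \<and> min_distance r s (centralizer_code A B) = s"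
    proof (rule finish[where T = T and cz = "unit_vec r 0"])
      show "\<And>u. u \<in> carrier_vec r \<Longrightarrow> T u \<in> carrier_mat r s" using Tc by blast
      show "\<And>u v. u \<in> carrier_vec r \<Longrightarrow> v \<in> carrier_vec r \<Longrightarrow> T (u + v) = T u + T v"
        by (rule eq_matI) (auto simp: T_def ring_distribs)
      show "\<And>k u. u \<in> carrier_vec r \<Longrightarrow> T (k \<cdot>\<^sub>v u) = k \<cdot>\<^sub>m T u"
        by (rule eq_matI) (auto simp: T_def mult_ac)
      show "\<And>u. u \<in> carrier_vec r \<Longrightarrow> T u = 0\<^sub>m r s \<Longrightarrow> u = 0\<^sub>v r"
      proof -
        fix u :: "'a vec" assume u: "u \<in> carrier_vec r" and T0: "T u = 0\<^sub>m r s"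
        show "u = 0\<^sub>v r"
        proof (rule eq_vecI)
          fix i assume "i < dim_vec (0\<^sub>v r :: 'a vec)"
          then have i: "i < r" by simp
          have "T u $$ (i,0) = 0" using T0 i s0 by simp
          then show "u $ i = 0\<^sub>v r $ i" using i s0 by (simp add: T_def)
        qed (use u in simp)
      qed
      show "centralizer_code A B = T ` carrier_vec r" by (fact Cimg)
      show "\<And>c. c \<in> carrier_vec r \<Longrightarrow> c \<noteq> 0\<^sub>v r \<Longrightarrow> s \<le> mat_weight (T c)"
      proof -
        fix c :: "'a vec" assume c: "c \<in> carrier_vec r" "c \<noteq> 0\<^sub>v r"
        then obtain i where i: "i < r" "c $ i \<noteq> 0" by (metis eq_vecI carrier_vecD index_zero_vec(1) index_zero_vec(2))
        have "card ((\<lambda>j. (i,j)) ` {..<s}) \<le> mat_weight (T c)"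
          by (rule weight_ge) (use i nz in \<open>auto simp: T_def\<close>)
        moreover have "card ((\<lambda>j. (i,j)) ` {..<s}) = s" by (simp add: card_image inj_on_def)
        ultimately show "s \<le> mat_weight (T c)" by simp
      qed
      show "unit_vec r 0 \<in> carrier_vec r" by simp
      show "unit_vec r 0 \<noteq> (0\<^sub>v r :: 'a vec)"
      proof
        assume "unit_vec r 0 = (0\<^sub>v r :: 'a vec)"
        then have "unit_vec r 0 $ 0 = (0\<^sub>v r :: 'a vec) $ 0" by simp
        then show False using r1 by simp
      qed
      have "{(i, j). i < dim_row (T (unit_vec r 0)) \<and> j < dim_col (T (unit_vec r 0)) \<and> T (unit_vec r 0) $$ (i, j) \<noteq> 0}
          = (\<lambda>j. (0,j)) ` {..<s}"
        using r1 nz[of 0] by (auto simp: T_def unit_vec_def split: if_splits)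
      then show "mat_weight (T (unit_vec r 0)) = s"
        unfolding mat_weight_def by (simp add: card_image inj_on_def)
    qed
    show "mat_subspace_dim r s (centralizer_code A B) = r" using main by simp
    show "min_distance r s (centralizer_code A B) = s" using main by simp
  qed
qed

lemma case_ge:
  fixes lam :: "nat \<Rightarrow> 'a::field"
  assumes s1: "1 \<le> s" and rs: "s \<le> r" and nz: "\<And>j. j < s \<Longrightarrow> lam j \<noteq> 0"
  shows "\<exists>(A :: 'a mat) B. A \<in> carrier_mat r r \<and> B \<in> carrier_mat s s \<and>
           mat_subspace_dim r s (centralizer_code A B) = s \<and>
           min_distance r s (centralizer_code A B) = r"
proof -
  obtain cf where root: "\<And>j. j < s \<Longrightarrow> (\<Sum>k<r. cf k * lam j ^ k) = lam j ^ r"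
    using exists_cf[OF rs, of lam] by blast
  define A :: "'a mat" where "A = mat r r (\<lambda>(i,k). if i + 1 < r then (if k = i + 1 then 1 else 0) else cf k)"
  define B :: "'a mat" where "B = mat s s (\<lambda>(i,j). if i = j then lam j else 0)"
  define T :: "'a vec \<Rightarrow> 'a mat" where "T = (\<lambda>c. mat r s (\<lambda>(i,j). c $ j * lam j ^ i))"
  have r0: "r > 0" using s1 rs by simp
  have XB: "(X * B) $$ (i,j) = lam j * X $$ (i,j)"
    if X: "X \<in> carrier_mat r s" and i: "i < r" and j: "j < s" for X i j
  proof -
    have "(X * B) $$ (i,j) = (\<Sum>k\<in>{0..<s}. X $$ (i,k) * B $$ (k,j))"
      using X i j by (simp add: B_def scalar_prod_def)
    also have "\<dots> = (\<Sum>k\<in>{0..<s}. if k = j then lam j * X $$ (i,j) else 0)"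
      by (rule sum.cong) (use j in \<open>auto simp: B_def\<close>)
    also have "\<dots> = lam j * X $$ (i,j)" using j by simp
    finally show ?thesis .
  qed
  have AX: "(A * X) $$ (i,j) = (if i + 1 < r then X $$ (i+1,j) else (\<Sum>k<r. cf k * X $$ (k,j)))"
    if X: "X \<in> carrier_mat r s" and i: "i < r" and j: "j < s" for X i j
  proof -
    have "(A * X) $$ (i,j) = (\<Sum>k\<in>{0..<r}. A $$ (i,k) * X $$ (k,j))"
      using X i j by (simp add: A_def scalar_prod_def)
    also have "\<dots> = (\<Sum>k\<in>{0..<r}. if i + 1 < r then (if k = i + 1 then X $$ (i+1,j) else 0) else cf k * X $$ (k,j))"
      by (rule sum.cong) (use i in \<open>auto simp: A_def\<close>)
    also have "\<dots> = (if i + 1 < r then X $$ (i+1,j) else (\<Sum>k<r. cf k * X $$ (k,j)))"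
      by (auto simp: atLeast0LessThan)
    finally show ?thesis .
  qed
  have Ac: "A \<in> carrier_mat r r" and Bc: "B \<in> carrier_mat s s" by (auto simp: A_def B_def)
  have colcond: "(\<forall>k<r. (if k + 1 < r then X $$ (k+1,j) else (\<Sum>i<r. cf i * X $$ (i,j))) = lam j * X $$ (k,j))
      \<longleftrightarrow> (\<forall>k<r. X $$ (k,j) = X $$ (0,j) * lam j ^ k)" if j: "j < s" for X j
  proof -
    have "(\<forall>k<r. (if k + 1 < r then X $$ (k+1,j) else (\<Sum>i<r. cf i * X $$ (i,j))) = lam j * X $$ (k,j))
      \<longleftrightarrow> ((\<forall>k. k + 1 < r \<longrightarrow> lam j * X $$ (k,j) = X $$ (k+1,j)) \<and> lam j * X $$ (r-1,j) = (\<Sum>i<r. cf i * X $$ (i,j)))"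
      (is "?L \<longleftrightarrow> ?R")
    proof
      assume L: ?L
      have a: "\<forall>k. k + 1 < r \<longrightarrow> lam j * X $$ (k,j) = X $$ (k+1,j)"
      proof (intro allI impI)
        fix k assume "k + 1 < r"
        then show "lam j * X $$ (k,j) = X $$ (k+1,j)" using L[rule_format, of k] by simp
      qed
      have "lam j * X $$ (r-1,j) = (\<Sum>i<r. cf i * X $$ (i,j))" using L[rule_format, of "r-1"] r0 by simp
      then show ?R using a by simp
    next
      assume R: ?R
      show ?L
      proof (intro allI impI)
        fix k assume k: "k < r"
        show "(if k + 1 < r then X $$ (k+1,j) else (\<Sum>i<r. cf i * X $$ (i,j))) = lam j * X $$ (k,j)"
        proof (cases "k + 1 < r")
          case True then show ?thesis using R by simp
        next
          case False then have "k = r - 1" using k by simp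
          then show ?thesis using R False by simp
        qed
      qed
    qed
    also have "\<dots> \<longleftrightarrow> (\<forall>k<r. X $$ (k,j) = X $$ (0,j) * lam j ^ k)"
      by (rule recur[OF r0 root[OF j]])
    finally show ?thesis .
  qed
  have dA: "dim_row A = r" "dim_row B = s" using Ac Bc by auto
  have Cchar: "centralizer_code A B = {X \<in> carrier_mat r s. \<forall>j<s. \<forall>k<r. X $$ (k,j) = X $$ (0,j) * lam j ^ k}"
  proof (rule Set.set_eqI)
    fix X
    show "X \<in> centralizer_code A B \<longleftrightarrow> X \<in> {X \<in> carrier_mat r s. \<forall>j<s. \<forall>k<r. X $$ (k,j) = X $$ (0,j) * lam j ^ k}"
    proof (cases "X \<in> carrier_mat r s")
      case False then show ?thesis unfolding centralizer_code_def dA mem_Collect_eq by blast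
    next
      case X: True
      have "A * X = X * B \<longleftrightarrow> (\<forall>i<r. \<forall>j<s. (A * X) $$ (i,j) = (X * B) $$ (i,j))"
        using X Ac Bc by (auto simp: mat_eq_iff)
      also have "\<dots> \<longleftrightarrow> (\<forall>i<r. \<forall>j<s. (if i + 1 < r then X $$ (i+1,j) else (\<Sum>k<r. cf k * X $$ (k,j))) = lam j * X $$ (i,j))"
        using AX[OF X] XB[OF X] by simp
      also have "\<dots> \<longleftrightarrow> (\<forall>j<s. \<forall>k<r. (if k + 1 < r then X $$ (k+1,j) else (\<Sum>i<r. cf i * X $$ (i,j))) = lam j * X $$ (k,j))"
        by blast
      also have "\<dots> \<longleftrightarrow> (\<forall>j<s. \<forall>k<r. X $$ (k,j) = X $$ (0,j) * lam j ^ k)"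
        using colcond by blast
      finally have eq: "A * X = X * B \<longleftrightarrow> (\<forall>j<s. \<forall>k<r. X $$ (k,j) = X $$ (0,j) * lam j ^ k)" .
      show ?thesis unfolding centralizer_code_def dA mem_Collect_eq eq by (rule refl)
    qed
  qed
  have Tc: "T c \<in> carrier_mat r s" for c by (simp add: T_def)
  have Cimg: "centralizer_code A B = T ` carrier_vec s"
  proof
    show "centralizer_code A B \<subseteq> T ` carrier_vec s"
    proof
      fix X assume "X \<in> centralizer_code A B"
      then have X: "X \<in> carrier_mat r s" "\<And>j k. j < s \<Longrightarrow> k < r \<Longrightarrow> X $$ (k,j) = X $$ (0,j) * lam j ^ k"
        unfolding Cchar by blast+
      have "X = T (vec s (\<lambda>j. X $$ (0,j)))"
      proof (rule eq_matI)
        fix i j assume ij: "i < dim_row (T (vec s (\<lambda>j. X $$ (0,j))))" "j < dim_col (T (vec s (\<lambda>j. X $$ (0,j))))"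
        then have i: "i < r" and j: "j < s" by (simp_all add: T_def)
        have e: "X $$ (i,j) = X $$ (0,j) * lam j ^ i" by (rule X(2)[OF j i])
        show "X $$ (i,j) = T (vec s (\<lambda>j. X $$ (0,j))) $$ (i,j)"
          unfolding e using i j by (simp add: T_def)
      qed (use X in \<open>simp_all add: T_def\<close>)
      moreover have "vec s (\<lambda>j. X $$ (0,j)) \<in> carrier_vec s" by simp
      ultimately show "X \<in> T ` carrier_vec s" by (rule image_eqI)
    qed
  next
    show "T ` carrier_vec s \<subseteq> centralizer_code A B"
    proof
      fix X assume "X \<in> T ` carrier_vec s"
      then obtain c where X: "X = T c" by blast
      show "X \<in> centralizer_code A B" unfolding Cchar X mem_Collect_eq
        using r0 by (simp add: T_def)
    qed
  qed
  show ?thesis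
  proof (intro exI conjI)
    show "A \<in> carrier_mat r r" "B \<in> carrier_mat s s" by (fact Ac, fact Bc)
    have main: "mat_subspace_dim r s (centralizer_code A B) = s \<and> min_distance r s (centralizer_code A B) = r"
    proof (rule finish[where T = T and cz = "unit_vec s 0"])
      show "\<And>u. u \<in> carrier_vec s \<Longrightarrow> T u \<in> carrier_mat r s" using Tc by blast
      show "\<And>u v. u \<in> carrier_vec s \<Longrightarrow> v \<in> carrier_vec s \<Longrightarrow> T (u + v) = T u + T v"
        by (rule eq_matI) (auto simp: T_def ring_distribs)
      show "\<And>k u. u \<in> carrier_vec s \<Longrightarrow> T (k \<cdot>\<^sub>v u) = k \<cdot>\<^sub>m T u"
        by (rule eq_matI) (auto simp: T_def mult_ac)
      show "\<And>u. u \<in> carrier_vec s \<Longrightarrow> T u = 0\<^sub>m r s \<Longrightarrow> u = 0\<^sub>v s"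
      proof -
        fix u :: "'a vec" assume u: "u \<in> carrier_vec s" and T0: "T u = 0\<^sub>m r s"
        show "u = 0\<^sub>v s"
        proof (rule eq_vecI)
          fix j assume "j < dim_vec (0\<^sub>v s :: 'a vec)"
          then have j: "j < s" by simp
          have "T u $$ (0,j) = 0" using T0 j r0 by simp
          then show "u $ j = 0\<^sub>v s $ j" using j r0 by (simp add: T_def)
        qed (use u in simp)
      qed
      show "centralizer_code A B = T ` carrier_vec s" by (fact Cimg)
      show "\<And>c. c \<in> carrier_vec s \<Longrightarrow> c \<noteq> 0\<^sub>v s \<Longrightarrow> r \<le> mat_weight (T c)"
      proof -
        fix c :: "'a vec" assume c: "c \<in> carrier_vec s" "c \<noteq> 0\<^sub>v s"
        then obtain j where j: "j < s" "c $ j \<noteq> 0" by (metis eq_vecI carrier_vecD index_zero_vec(1) index_zero_vec(2))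
        have "card ((\<lambda>i. (i,j)) ` {..<r}) \<le> mat_weight (T c)"
          by (rule weight_ge) (use j nz in \<open>auto simp: T_def\<close>)
        moreover have "card ((\<lambda>i. (i,j)) ` {..<r}) = r" by (simp add: card_image inj_on_def)
        ultimately show "r \<le> mat_weight (T c)" by simp
      qed
      show "unit_vec s 0 \<in> carrier_vec s" by simp
      show "unit_vec s 0 \<noteq> (0\<^sub>v s :: 'a vec)"
      proof
        assume "unit_vec s 0 = (0\<^sub>v s :: 'a vec)"
        then have "unit_vec s 0 $ 0 = (0\<^sub>v s :: 'a vec) $ 0" by simp
        then show False using s1 by simp
      qed
      have "{(i, j). i < dim_row (T (unit_vec s 0)) \<and> j < dim_col (T (unit_vec s 0)) \<and> T (unit_vec s 0) $$ (i, j) \<noteq> 0}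
          = (\<lambda>i. (i,0)) ` {..<r}"
        using s1 nz[of 0] by (auto simp: T_def unit_vec_def split: if_splits)
      then show "mat_weight (T (unit_vec s 0)) = r"
        unfolding mat_weight_def by (simp add: card_image inj_on_def)
    qed
    show "mat_subspace_dim r s (centralizer_code A B) = s" using main by simp
    show "min_distance r s (centralizer_code A B) = r" using main by simp
  qed
qed

theorem corollary4p4:
  fixes r s :: nat
  assumes "r \<ge> 1" and "s \<ge> 1"
    and "infinite (UNIV :: 'a::field set) \<or> card (UNIV :: 'a set) \<ge> min r s + 2"
  shows "\<exists>(A :: 'a mat) B. A \<in> carrier_mat r r \<and> B \<in> carrier_mat s s \<and>
           mat_subspace_dim r s (centralizer_code A B) = min r s \<and>
           min_distance r s (centralizer_code A B) = max r s"
proof (cases "r \<le> s")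
  case True
  have "\<exists>(A :: 'a mat) B. A \<in> carrier_mat r r \<and> B \<in> carrier_mat s s \<and>
           mat_subspace_dim r s (centralizer_code A B) = r \<and>
           min_distance r s (centralizer_code A B) = s"
    by (rule case_le[OF assms(1) True, of "\<lambda>_. 1"]) simp
  moreover have "min r s = r" "max r s = s" using True by simp_all
  ultimately show ?thesis by simp
next
  case False
  then have le: "s \<le> r" by simp
  have "\<exists>(A :: 'a mat) B. A \<in> carrier_mat r r \<and> B \<in> carrier_mat s s \<and>
           mat_subspace_dim r s (centralizer_code A B) = s \<and>
           min_distance r s (centralizer_code A B) = r"
    by (rule case_ge[OF assms(2) le, of "\<lambda>_. 1"]) simp
  moreover have "min r s = s" "max r s = r" using le by simp_all
  ultimately show ?thesis by simp
qed

end
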